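(* Fix $n\ge2$. The valuation distribution is not identified from the equilibrium bid distribution: there exist two model structures $(u,F_0,D)$ and $(\tilde u,\tilde F_0,\tilde D)$, both satisfying the assumptions in the context, with $F_0\ne\tilde F_0$, whose symmetric equilibria induce the same distribution $G(\cdot\mid n)$ of equilibrium bids.
   Context: A model structure $(u,F_0,D)$ for a first-price auction (no reserve price) with $n\ge2$ bidders consists of: a utility $u:\mathbb R_+\to\mathbb R_+$ with $u'>0$, $u''\le0$, $u(0)=0$; a valuation distribution $F_0$ on $[\underline v,\overline v]$ with continuous density $f_0>0$, from which the $n$ values are drawn i.i.d.; and a function $D(\gamma)=F^*(F_0^{-1}(\gamma))$, where bidders have maxmin expected utility over a weakly compact convex set $\Gamma$ of strictly increasing $C^1$ distributions on $[\underline v,\overline v]$ containing $F_0$ with least element $F^*\in\Gamma$ ($F^*\le F$ pointwise for all $F\in\Gamma$) having density $f^*>0$. A symmetric equilibrium is a strictly increasing $\beta_n$ such that for every value $v$, $x=v$ maximizes $u[v-\beta_n(x)]D[F_0(x)]^{n-1}$. The bid distribution is $G(b\mid n)=F_0(\beta_n^{-1}(b))$, the distribution of $\beta_n(v)$ for $v\sim F_0$. *)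

theory Defs
  imports Complex_Main
begin

definition utility :: "(real \<Rightarrow> real) \<Rightarrow> bool" where
  "utility u \<longleftrightarrow> u 0 = 0 \<and> (\<forall>x\<ge>0. u x \<ge> 0) \<and>
     (\<exists>u1 u2. \<forall>x\<ge>0.
        (u has_real_derivative u1 x) (at x within {0..}) \<and> u1 x > 0 \<and>
        (u1 has_real_derivative u2 x) (at x within {0..}) \<and> u2 x \<le> 0)"

definition cdf_on :: "real \<Rightarrow> real \<Rightarrow> (real \<Rightarrow> real) \<Rightarrow> bool" where
  "cdf_on lo hi F \<longleftrightarrow> lo < hi \<and> (\<forall>x\<le>lo. F x = 0) \<and> (\<forall>x\<ge>hi. F x = 1) \<and>
     mono F"

definition valuation_dist :: "real \<Rightarrow> real \<Rightarrow> (real \<Rightarrow> real) \<Rightarrow> bool" where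
  "valuation_dist lo hi F0 \<longleftrightarrow> cdf_on lo hi F0 \<and>
     (\<exists>f0. continuous_on {lo..hi} f0 \<and> (\<forall>x\<in>{lo..hi}. f0 x > 0 \<and>
        (F0 has_real_derivative f0 x) (at x within {lo..hi})))"

definition smooth_dist :: "real \<Rightarrow> real \<Rightarrow> (real \<Rightarrow> real) \<Rightarrow> bool" where
  "smooth_dist lo hi F \<longleftrightarrow> cdf_on lo hi F \<and> strict_mono_on {lo..hi} F \<and>
     (\<exists>f. continuous_on {lo..hi} f \<and>
        (\<forall>x\<in>{lo..hi}. (F has_real_derivative f x) (at x within {lo..hi})))"

text \<open>Weak compactness of a set of distributions on [lo,hi] (topology of weak
  convergence, which is metrizable here, so sequential compactness).  Since all
  members are continuous CDFs, weak convergence to a member means pointwise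
  convergence of the CDFs.\<close>
definition weakly_compact_dists :: "real \<Rightarrow> real \<Rightarrow> (real \<Rightarrow> real) set \<Rightarrow> bool" where
  "weakly_compact_dists lo hi \<Gamma> \<longleftrightarrow>
     (\<forall>s::nat \<Rightarrow> real \<Rightarrow> real. (\<forall>k. s k \<in> \<Gamma>) \<longrightarrow>
        (\<exists>r F. strict_mono r \<and> F \<in> \<Gamma> \<and>
           (\<forall>x\<in>{lo..hi}. (\<lambda>k. s (r k) x) \<longlonglongrightarrow> F x)))"

definition convex_dists :: "(real \<Rightarrow> real) set \<Rightarrow> bool" where
  "convex_dists \<Gamma> \<longleftrightarrow>
     (\<forall>F\<in>\<Gamma>. \<forall>G\<in>\<Gamma>. \<forall>t\<in>{0..1}. (\<lambda>x. t * F x + (1 - t) * G x) \<in> \<Gamma>)"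

definition ambiguity_set ::
  "real \<Rightarrow> real \<Rightarrow> (real \<Rightarrow> real) set \<Rightarrow> (real \<Rightarrow> real) \<Rightarrow> (real \<Rightarrow> real) \<Rightarrow> bool" where
  "ambiguity_set lo hi \<Gamma> F0 Fstar \<longleftrightarrow>
     (\<forall>F\<in>\<Gamma>. smooth_dist lo hi F) \<and> convex_dists \<Gamma> \<and>
     weakly_compact_dists lo hi \<Gamma> \<and> F0 \<in> \<Gamma> \<and> Fstar \<in> \<Gamma> \<and>
     (\<forall>F\<in>\<Gamma>. \<forall>x. Fstar x \<le> F x) \<and>
     (\<exists>fs. \<forall>x\<in>{lo..hi}. fs x > 0 \<and>
        (Fstar has_real_derivative fs x) (at x within {lo..hi}))"

text \<open>Model structure (u, F0, D) with support [lo,hi]; D(gamma) = F*(F0^{-1}(gamma)),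
  written as D(F0 x) = F*(x) for x in [lo,hi].\<close>
definition model_structure ::
  "(real \<Rightarrow> real) \<Rightarrow> real \<Rightarrow> real \<Rightarrow> (real \<Rightarrow> real) \<Rightarrow> (real \<Rightarrow> real) \<Rightarrow> bool" where
  "model_structure u lo hi F0 D \<longleftrightarrow> utility u \<and> valuation_dist lo hi F0 \<and>
     (\<exists>\<Gamma> Fstar. ambiguity_set lo hi \<Gamma> F0 Fstar \<and>
        (\<forall>x\<in>{lo..hi}. D (F0 x) = Fstar x))"

text \<open>Symmetric equilibrium with n bidders: strictly increasing beta such that for
  every value v, reporting x = v maximizes u[v - beta x] D[F0 x]^(n-1)
  (bids never exceed values, so that u is evaluated on R_+).\<close>
definition sym_equilibrium ::
  "nat \<Rightarrow> (real \<Rightarrow> real) \<Rightarrow> real \<Rightarrow> real \<Rightarrow> (real \<Rightarrow> real) \<Rightarrow> (real \<Rightarrow> real)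
     \<Rightarrow> (real \<Rightarrow> real) \<Rightarrow> bool" where
  "sym_equilibrium n u lo hi F0 D \<beta> \<longleftrightarrow> strict_mono_on {lo..hi} \<beta> \<and>
     (\<forall>v\<in>{lo..hi}. \<beta> v \<le> v \<and>
        (\<forall>x\<in>{lo..hi}. \<beta> x \<le> v \<longrightarrow>
           u (v - \<beta> x) * D (F0 x) ^ (n - 1) \<le> u (v - \<beta> v) * D (F0 v) ^ (n - 1)))"

text \<open>Bid distribution G(b) = P(beta(V) \<le> b), V ~ F0, i.e. F0(beta^{-1}(b)).\<close>
definition bid_cdf ::
  "real \<Rightarrow> real \<Rightarrow> (real \<Rightarrow> real) \<Rightarrow> (real \<Rightarrow> real) \<Rightarrow> real \<Rightarrow> real" where
  "bid_cdf lo hi F0 \<beta> b =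
     (if {v\<in>{lo..hi}. \<beta> v \<le> b} = {} then 0
      else F0 (Sup {v\<in>{lo..hi}. \<beta> v \<le> b}))"

end

theory Submission
  imports Defs
begin

definition PP :: "real \<Rightarrow> real" where "PP t = t * (1 + t)"
definition ym :: "real \<Rightarrow> real \<Rightarrow> real" where
  "ym M v = (sqrt ((M+1)^2 + 4*M*v) - (M+1)) / (2*M)"

lemma transf_deriv:
  assumes "(g has_real_derivative d) (at x)" "x \<in> S" "\<And>y. y \<in> S \<Longrightarrow> g y = f y"
  shows "(f has_real_derivative d) (at x within S)"
  using has_field_derivative_transform_within[OF has_field_derivative_at_within[OF assms(1)] zero_less_one assms(2)] assms(3)
  by blast

lemma ym_nonneg: assumes "M > 0" "v \<ge> 0" shows "ym M v \<ge> 0"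
proof -
  have "sqrt ((M+1)^2) \<le> sqrt ((M+1)^2 + 4*M*v)" using assms by (intro real_sqrt_le_mono) auto
  then show ?thesis using assms unfolding ym_def by (auto simp: divide_simps)
qed

lemma ym_Q: assumes "M > 0" "v \<ge> 0" shows "ym M v + M * PP (ym M v) = v"
proof -
  define r where "r = sqrt ((M+1)^2 + 4*M*v)"
  have r2: "r^2 = (M+1)^2 + 4*M*v" unfolding r_def using assms by (simp add: add_nonneg_nonneg)
  define y where "y = ym M v"
  have y: "2*M*y = r - (M+1)" unfolding y_def ym_def r_def using assms by simp
  have "4*M*(y + M * PP y) = (2*M*y)^2 + 2*(M+1)*(2*M*y)" unfolding PP_def by (simp add: algebra_simps power2_eq_square)
  also have "\<dots> = 4*M*v" unfolding y using r2 by (simp add: algebra_simps power2_eq_square)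
  finally show ?thesis using assms unfolding y_def by simp
qed

lemma Q_ym: assumes "M > 0" "y \<ge> 0" shows "ym M (y + M * PP y) = y"
proof -
  have "(M+1)^2 + 4*M*(y + M * PP y) = (2*M*y + M + 1)^2" unfolding PP_def by (simp add: algebra_simps power2_eq_square)
  moreover have "sqrt ((2*M*y + M + 1)^2) = 2*M*y + M + 1" using assms by simp
  ultimately show ?thesis unfolding ym_def using assms by simp
qed

lemma Q_strict: assumes "M > 0" "0 \<le> a" "a < b" shows "a + M * PP a < b + M * PP b"
proof -
  have "PP a < PP b" unfolding PP_def using assms by (smt (verit) mult_strict_mono)
  then show ?thesis using assms by (smt (verit) mult_strict_left_mono)
qed

lemma ym_strict: assumes "M > 0" "0 \<le> v" "v < w" shows "ym M v < ym M w"
proof (rule ccontr)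
  assume "\<not> ?thesis"
  hence "ym M w \<le> ym M v" by simp
  moreover have "ym M w \<ge> 0" using assms by (intro ym_nonneg) auto
  ultimately have "ym M w + M * PP (ym M w) \<le> ym M v + M * PP (ym M v)"
    using Q_strict[OF assms(1)] by (metis less_eq_real_def)
  then show False using ym_Q[of M v] ym_Q[of M w] assms by simp
qed

lemma ym_deriv: assumes "M > 0" "v \<ge> 0"
  shows "(ym M has_real_derivative 1 / sqrt ((M+1)^2 + 4*M*v)) (at v)"
proof -
  have pos: "(M+1)^2 + 4*M*v > 0" using assms by (smt (verit) mult_nonneg_nonneg zero_less_power)
  have "((\<lambda>v. (M+1)^2 + 4*M*v) has_real_derivative 4*M) (at v)"
    by (auto intro!: derivative_eq_intros)
  from DERIV_chain2[OF DERIV_real_sqrt[OF pos] this] have "((\<lambda>v. sqrt ((M+1)^2 + 4*M*v)) has_real_derivative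
      inverse (sqrt ((M+1)^2 + 4*M*v)) / 2 * (4*M)) (at v)"
    by simp
  from DERIV_cdivide[OF DERIV_diff[OF this DERIV_const[of "M+1"]], of "2*M"]
  show ?thesis unfolding ym_def[abs_def] using assms by (simp add: field_simps)
qed

lemma coreA:
  fixes m :: nat and x v :: real
  assumes "x \<ge> 0" "v \<ge> 0"
  shows "(v - real m / (real m + 1) * x) * x ^ m \<le> (v - real m / (real m + 1) * v) * v ^ m"
proof (cases "x = 0")
  case True
  then show ?thesis using assms by (cases m) (auto simp: field_simps)
next
  case False
  hence xp: "x > 0" using assms by simp
  define t where "t = v / x"
  have "1 + real (Suc m) * (t - 1) \<le> (1 + (t - 1)) ^ Suc m"
    by (rule Bernoulli_inequality) (use assms xp in \<open>simp add: t_def\<close>)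
  hence "1 + real (Suc m) * (t - 1) \<le> t ^ Suc m" by simp
  hence "x ^ Suc m * (1 + real (Suc m) * (t - 1)) \<le> x ^ Suc m * t ^ Suc m"
    using xp by (intro mult_left_mono) auto
  also have "x ^ Suc m * t ^ Suc m = v ^ Suc m" using xp by (simp add: t_def power_divide)
  also have "x ^ Suc m * (1 + real (Suc m) * (t - 1)) = x ^ Suc m + real (Suc m) * (v - x) * x ^ m"
    using xp by (simp add: t_def field_simps)
  finally have *: "x ^ Suc m + real (Suc m) * (v - x) * x ^ m \<le> v ^ Suc m" .
  have "(real m + 1) * ((v - real m / (real m + 1) * x) * x ^ m) = x ^ Suc m + real (Suc m) * (v - x) * x ^ m"
    by (simp add: field_simps)
  also have "\<dots> \<le> v ^ Suc m" by (rule *)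
  also have "v ^ Suc m = (real m + 1) * ((v - real m / (real m + 1) * v) * v ^ m)"
    by (simp add: field_simps)
  finally show ?thesis by (smt (verit) mult_le_cancel_left_pos of_nat_0_le_iff)
qed

lemma alg0:
  fixes a z p q mm w :: real
  assumes "a \<noteq> 0"
  shows "(- (mm * w)) / (a * a) * (p * q) + mm * q * w * (z / a) = mm * w * q / (a * a) * (z * a - p)"
  using assms by (simp add: field_simps)

lemma alg:
  fixes z p q mm w :: real
  assumes "1 + z \<noteq> 0"
  shows "((0 - mm * w) * (1 + z) - z * (0 + (0 - mm * w))) / ((1+z) * (1+z)) * (p * q)
     + mm * q * w * (z / (1 + z)) = mm * w * q / (1 + z)^2 * (z * (1 + z) - p)"
proof -
  have n: "(0 - mm * w) * (1 + z) - z * (0 + (0 - mm * w)) = - (mm * w)" by (simp add: algebra_simps)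
  show ?thesis unfolding n power2_eq_square by (rule alg0[OF assms])
qed

lemma coreB_deriv:
  fixes m :: nat and y t :: real
  defines "z \<equiv> y + real m * PP y - real m * PP t"
  assumes "m \<ge> 1" "1 + z \<noteq> 0"
  shows "((\<lambda>t. (y + real m * PP y - real m * PP t) / (1 + (y + real m * PP y - real m * PP t)) * PP t ^ m)
     has_real_derivative (real m * (1 + 2*t) * PP t ^ (m - 1) / (1 + z)^2 * (z * (1 + z) - PP t))) (at t)"
proof -
  have dP: "\<And>t. (PP has_real_derivative (1 + 2*t)) (at t)"
    unfolding PP_def[abs_def] by (auto intro!: derivative_eq_intros)
  have dz: "((\<lambda>t. y + real m * PP y - real m * PP t) has_real_derivative (0 - real m * (1 + 2*t))) (at t)"
    by (intro DERIV_diff DERIV_const DERIV_cmult dP)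
  have d1: "((\<lambda>t. (y + real m * PP y - real m * PP t) / (1 + (y + real m * PP y - real m * PP t)))
      has_real_derivative ((0 - real m * (1 + 2*t)) * (1 + z) - z * (0 + (0 - real m * (1 + 2*t)))) / ((1+z) * (1+z))) (at t)"
    using DERIV_divide[OF dz DERIV_add[OF DERIV_const dz]] assms(3) unfolding z_def by simp
  have d2: "((\<lambda>t. PP t ^ m) has_real_derivative real m * PP t ^ (m - 1) * (1 + 2*t)) (at t)"
    using DERIV_power[OF dP, of m] by (simp add: mult_ac)
  have pm: "PP t ^ m = PP t * PP t ^ (m - 1)" using assms(2) by (metis One_nat_def Suc_pred less_eq_Suc_le power_Suc)
  have zt: "y + real m * PP y - real m * PP t = z" unfolding z_def by simp
  have eq: "((0 - real m * (1 + 2*t)) * (1 + z) - z * (0 + (0 - real m * (1 + 2*t)))) / ((1+z) * (1+z)) * PP t ^ m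
     + real m * PP t ^ (m - 1) * (1 + 2*t) * (z / (1 + z))
     = real m * (1 + 2*t) * PP t ^ (m - 1) / (1 + z)^2 * (z * (1 + z) - PP t)"
    unfolding pm using assms(3) by (rule alg)
  show ?thesis using DERIV_mult[OF d1 d2] unfolding zt eq .
qed

lemma PP_mono: "0 \<le> a \<Longrightarrow> a \<le> b \<Longrightarrow> PP a \<le> PP b"
  unfolding PP_def by (intro mult_mono) auto

lemma PP_nonneg: "0 \<le> a \<Longrightarrow> 0 \<le> PP a"
  unfolding PP_def by simp

lemma coreB:
  fixes m :: nat and y s :: real
  assumes m: "m \<ge> 1" and y: "y \<ge> 0" and s: "s \<ge> 0"
    and zs: "y + real m * PP y - real m * PP s \<ge> 0"
  shows "(y + real m * PP y - real m * PP s) / (1 + (y + real m * PP y - real m * PP s)) * PP s ^ m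
     \<le> y / (1 + y) * PP y ^ m"
proof -
  define Z where "Z t = y + real m * PP y - real m * PP t" for t
  define \<Phi> where "\<Phi> t = Z t / (1 + Z t) * PP t ^ m" for t
  have PhiZ: "\<Phi> = (\<lambda>t. (y + real m * PP y - real m * PP t) / (1 + (y + real m * PP y - real m * PP t)) * PP t ^ m)"
    unfolding \<Phi>_def Z_def by simp
  have Zy: "Z y = y" unfolding Z_def by simp
  have f1: "Z t - t = (y - t) * (1 + real m * (1 + y + t))" for t
    unfolding Z_def PP_def by (simp add: algebra_simps)
  have f2: "Z t * (1 + Z t) - PP t = (Z t - t) * (1 + Z t + t)" for t
    unfolding PP_def by (simp add: algebra_simps)
  have der: "(\<Phi> has_real_derivative (real m * (1 + 2*t) * PP t ^ (m - 1) / (1 + Z t)^2 * (Z t * (1 + Z t) - PP t))) (at t)"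
    if "1 + Z t \<noteq> 0" for t
    unfolding PhiZ using coreB_deriv[OF m, of y t] that unfolding Z_def by simp
  have cont: "continuous_on {a..b} \<Phi>" if "\<And>t. t \<in> {a..b} \<Longrightarrow> 1 + Z t \<noteq> 0" for a b
    using der that by (intro continuous_at_imp_continuous_on ballI DERIV_isCont) blast
  have "\<Phi> s \<le> \<Phi> y"
  proof (cases "s \<le> y")
    case True
    have pos: "1 + Z t > 0" if "t \<ge> 0" "t \<le> y" for t
    proof -
      have "Z t - t \<ge> 0" unfolding f1 using that y by (intro mult_nonneg_nonneg) auto
      then show ?thesis using that by simp
    qed
    show ?thesis
    proof (rule DERIV_nonneg_imp_increasing_open[OF True])
      fix t assume t: "s < t" "t < y"
      have "1 + Z t \<noteq> 0" using pos[of t] t s by simp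
      moreover have "0 \<le> real m * (1 + 2*t) * PP t ^ (m - 1) / (1 + Z t)^2 * (Z t * (1 + Z t) - PP t)"
      proof -
        have a: "Z t - t \<ge> 0" unfolding f1 using t s y by (intro mult_nonneg_nonneg) auto
        have "Z t * (1 + Z t) - PP t \<ge> 0" unfolding f2 using a t s by (intro mult_nonneg_nonneg) auto
        moreover have "0 \<le> real m * (1 + 2*t) * PP t ^ (m - 1) / (1 + Z t)^2"
          using t s PP_nonneg[of t] by (intro divide_nonneg_nonneg mult_nonneg_nonneg) auto
        ultimately show ?thesis by (metis mult_nonneg_nonneg)
      qed
      ultimately show "\<exists>d. (\<Phi> has_real_derivative d) (at t) \<and> 0 \<le> d" using der by blast
    next
      show "continuous_on {s..y} \<Phi>" using pos s by (intro cont) (smt (verit) atLeastAtMost_iff)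
    qed
  next
    case False
    hence ys: "y \<le> s" by simp
    have Zge: "Z t \<ge> 0" if "t \<le> s" "t \<ge> 0" for t
    proof -
      have "PP t \<le> PP s" using that PP_mono by simp
      hence "Z s \<le> Z t" unfolding Z_def by (simp add: mult_left_mono)
      then show ?thesis using zs unfolding Z_def by simp
    qed
    show ?thesis
    proof (rule DERIV_nonpos_imp_decreasing_open[OF ys])
      fix t assume t: "y < t" "t < s"
      have z0: "Z t \<ge> 0" using Zge[of t] t y by simp
      have "1 + Z t \<noteq> 0" using z0 by simp
      moreover have "real m * (1 + 2*t) * PP t ^ (m - 1) / (1 + Z t)^2 * (Z t * (1 + Z t) - PP t) \<le> 0"
      proof -
        have a: "Z t - t \<le> 0" unfolding f1 using t y by (intro mult_nonpos_nonneg) auto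
        have "Z t * (1 + Z t) - PP t \<le> 0" unfolding f2 using a t y z0 by (intro mult_nonpos_nonneg) auto
        moreover have "0 \<le> real m * (1 + 2*t) * PP t ^ (m - 1) / (1 + Z t)^2"
          using t y PP_nonneg[of t] by (intro divide_nonneg_nonneg mult_nonneg_nonneg) auto
        ultimately show ?thesis by (metis mult_nonneg_nonpos)
      qed
      ultimately show "\<exists>d. (\<Phi> has_real_derivative d) (at t) \<and> d \<le> 0" using der by blast
    next
      show "continuous_on {y..s} \<Phi>" using Zge y by (intro cont) (smt (verit) atLeastAtMost_iff)
    qed
  qed
  then show ?thesis unfolding \<Phi>_def Zy unfolding Z_def by simp
qed

lemma utility_lin: "utility (\<lambda>x. x)"
  unfolding utility_def
  by (rule conjI, simp, rule conjI, simp, rule exI[of _ "\<lambda>_. 1"], rule exI[of _ "\<lambda>_. 0"])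
     (auto intro!: derivative_eq_intros)

lemma inv_sq_deriv: "(a::real) \<noteq> 0 \<Longrightarrow> ((\<lambda>a. 1 / a^2) has_real_derivative -2 / a^3) (at a)"
  by (auto intro!: derivative_eq_intros simp: field_simps power2_eq_square power3_eq_cube)

lemma utility_frac: "utility (\<lambda>x. x / (1 + x))"
  unfolding utility_def
proof (intro conjI)
  show "\<exists>u1 u2. \<forall>x\<ge>0. ((\<lambda>x. x / (1 + x)) has_real_derivative u1 x) (at x within {0..}) \<and> 0 < u1 x \<and>
        (u1 has_real_derivative u2 x) (at x within {0..}) \<and> u2 x \<le> 0"
  proof (intro exI allI impI conjI)
    fix x :: real assume x: "x \<ge> 0"
    have ne: "1 + x \<noteq> 0" using x by simp
    show "((\<lambda>x. x / (1 + x)) has_real_derivative 1 / (1+x)^2) (at x within {0..})"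
      by (rule has_field_derivative_at_within) (use ne in \<open>auto intro!: derivative_eq_intros simp: field_simps power2_eq_square\<close>)
    show "0 < 1 / (1+x)^2" using ne by simp
    show "((\<lambda>x. 1 / (1+x)^2) has_real_derivative -2 / (1+x)^3) (at x within {0..})"
    proof (rule has_field_derivative_at_within)
      have g: "((\<lambda>a. 1 / a^2) has_real_derivative -2 / (1+x)^3) (at (1+x))"
        using inv_sq_deriv[OF ne] .
      have h: "((\<lambda>x. 1 + x) has_real_derivative 1) (at x)" by (auto intro!: derivative_eq_intros)
      from DERIV_chain2[OF g h] show "((\<lambda>x. 1 / (1+x)^2) has_real_derivative -2 / (1+x)^3) (at x)" by simp
    qed
    show "-2 / (1+x)^3 \<le> (0::real)" using x by simp
  qed
qed auto

lemma mono_clamp: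
  fixes F :: "real \<Rightarrow> real"
  assumes "lo < hi" "\<forall>x\<le>lo. F x = 0" "\<forall>x\<ge>hi. F x = 1" "strict_mono_on {lo..hi} F"
  shows "mono F"
proof (rule monoI)
  fix x y :: real assume xy: "x \<le> y"
  define c where "c t = max lo (min hi t)" for t
  have Fc: "F t = F (c t)" for t
  proof -
    consider "t \<le> lo" | "t \<ge> hi" | "lo < t \<and> t < hi" by linarith
    then show ?thesis
    proof cases
      case 1 then show ?thesis using assms unfolding c_def by (simp add: max_def min_def)
    next
      case 2 then show ?thesis using assms unfolding c_def by (simp add: max_def min_def)
    qed (auto simp: c_def)
  qed
  have "c x \<le> c y" "c x \<in> {lo..hi}" "c y \<in> {lo..hi}" using xy assms(1) unfolding c_def by auto
  hence "F (c x) \<le> F (c y)" using assms(4) by (metis order_le_less strict_mono_onD)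
  then show "F x \<le> F y" using Fc by metis
qed

lemma model_single:
  assumes "utility u" "valuation_dist lo hi F" "strict_mono_on {lo..hi} F"
  shows "model_structure u lo hi F (\<lambda>g. g)"
proof -
  obtain f0 where f0: "continuous_on {lo..hi} f0" "\<forall>x\<in>{lo..hi}. f0 x > 0 \<and> (F has_real_derivative f0 x) (at x within {lo..hi})"
    using assms(2) unfolding valuation_dist_def by blast
  have cdf: "cdf_on lo hi F" using assms(2) unfolding valuation_dist_def by blast
  have sm: "smooth_dist lo hi F" unfolding smooth_dist_def using cdf assms(3) f0 by blast
  have "ambiguity_set lo hi {F} F F"
    unfolding ambiguity_set_def convex_dists_def weakly_compact_dists_def
  proof (intro conjI)
    show "\<forall>Fa\<in>{F}. \<forall>G\<in>{F}. \<forall>t\<in>{0..1}. (\<lambda>x. t * Fa x + (1 - t) * G x) \<in> {F}"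
      by (auto simp: algebra_simps)
    show "\<forall>s::nat\<Rightarrow>real\<Rightarrow>real. (\<forall>k. s k \<in> {F}) \<longrightarrow> (\<exists>r Fa. strict_mono r \<and> Fa \<in> {F} \<and> (\<forall>x\<in>{lo..hi}. (\<lambda>k. s (r k) x) \<longlonglongrightarrow> Fa x))"
      by (intro allI impI exI[of _ id] exI[of _ F]) (auto simp: strict_mono_def)
    show "\<exists>fs. \<forall>x\<in>{lo..hi}. 0 < fs x \<and> (F has_real_derivative fs x) (at x within {lo..hi})"
      using f0 by blast
  qed (use sm in auto)
  then show ?thesis unfolding model_structure_def using assms(1,2) by blast
qed

definition FA :: "real \<Rightarrow> real \<Rightarrow> real" where
  "FA M x = (if x \<le> 0 then 0 else if 2*M+2 \<le> x then 1 else x / (2*M+2))"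

definition FB :: "real \<Rightarrow> real \<Rightarrow> real" where
  "FB M x = (if x \<le> 0 then 0 else if 2*M+1 \<le> x then 1 else PP (ym M x) / 2)"

lemma FA_in: assumes "M > 0" "x \<in> {0..2*M+2}" shows "FA M x = x / (2*M+2)"
  using assms unfolding FA_def by auto

lemma ym0: "M > 0 \<Longrightarrow> ym M 0 = 0"
  using Q_ym[of M 0] by (simp add: PP_def)

lemma ym1: "M > 0 \<Longrightarrow> ym M (2*M+1) = 1"
  using Q_ym[of M 1] by (simp add: PP_def algebra_simps)

lemma FB_in: assumes "M > 0" "x \<in> {0..2*M+1}" shows "FB M x = PP (ym M x) / 2"
  using assms ym0[OF assms(1)] ym1[OF assms(1)] unfolding FB_def by (auto simp: PP_def)

lemma PP_strict: "0 \<le> a \<Longrightarrow> a < b \<Longrightarrow> PP a < PP b"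
  unfolding PP_def by (smt (verit) mult_strict_mono)

lemma smA: assumes "M > 0" shows "strict_mono_on {0..2*M+2} (FA M)"
  by (rule strict_mono_onI) (use assms in \<open>auto simp: FA_in divide_strict_right_mono\<close>)

lemma smB: assumes "M > 0" shows "strict_mono_on {0..2*M+1} (FB M)"
proof (rule strict_mono_onI)
  fix r s assume rs: "r \<in> {0..2*M+1}" "s \<in> {0..2*M+1}" "r < s"
  have "ym M r < ym M s" using ym_strict[OF assms] rs by auto
  hence "PP (ym M r) < PP (ym M s)" using PP_strict ym_nonneg[OF assms] rs by auto
  then show "FB M r < FB M s" using rs FB_in[OF assms, of r] FB_in[OF assms, of s] by simp
qed

lemma valA: assumes "M > 0" shows "valuation_dist 0 (2*M+2) (FA M)"
  unfolding valuation_dist_def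
proof (intro conjI)
  have c: "cdf_on 0 (2*M+2) (FA M) \<longleftrightarrow> True"
    unfolding cdf_on_def using assms mono_clamp[of 0 "2*M+2" "FA M"] smA[OF assms] by (auto simp: FA_def)
  then show "cdf_on 0 (2*M+2) (FA M)" by simp
  show "\<exists>f0. continuous_on {0..2 * M + 2} f0 \<and> (\<forall>x\<in>{0..2 * M + 2}. 0 < f0 x \<and> (FA M has_real_derivative f0 x) (at x within {0..2 * M + 2}))"
  proof (intro exI[of _ "\<lambda>_. 1 / (2*M+2)"] conjI ballI)
    fix x assume x: "x \<in> {0..2*M+2}"
    show "0 < 1 / (2*M+2)" using assms by simp
    show "(FA M has_real_derivative 1 / (2*M+2)) (at x within {0..2*M+2})"
      by (rule transf_deriv[where g="\<lambda>x. x / (2*M+2)"]) (use x assms FA_in in \<open>auto intro!: derivative_eq_intros\<close>)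
  qed auto
qed

lemma derB: assumes "M > 0" "x \<ge> 0"
  shows "((\<lambda>x. PP (ym M x) / 2) has_real_derivative (1 + 2 * ym M x) * (1 / sqrt ((M+1)^2 + 4*M*x)) / 2) (at x)"
proof -
  have dP: "\<And>t. (PP has_real_derivative (1 + 2*t)) (at t)"
    unfolding PP_def[abs_def] by (auto intro!: derivative_eq_intros)
  from DERIV_cdivide[OF DERIV_chain2[OF dP ym_deriv[OF assms]], of 2] show ?thesis by simp
qed

lemma valB: assumes "M > 0" shows "valuation_dist 0 (2*M+1) (FB M)"
  unfolding valuation_dist_def
proof (intro conjI)
  have c: "cdf_on 0 (2*M+1) (FB M) \<longleftrightarrow> True"
    unfolding cdf_on_def using assms mono_clamp[of 0 "2*M+1" "FB M"] smB[OF assms] by (auto simp: FB_def)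
  then show "cdf_on 0 (2*M+1) (FB M)" by simp
  show "\<exists>f0. continuous_on {0..2 * M + 1} f0 \<and> (\<forall>x\<in>{0..2 * M + 1}. 0 < f0 x \<and> (FB M has_real_derivative f0 x) (at x within {0..2 * M + 1}))"
  proof (intro exI[of _ "\<lambda>x. (1 + 2 * ym M x) * (1 / sqrt ((M+1)^2 + 4*M*x)) / 2"] conjI ballI)
    have pos: "(M+1)^2 + 4*M*x > 0" if "x \<ge> 0" for x using assms that by (smt (verit) mult_nonneg_nonneg zero_less_power)
    show "continuous_on {0..2*M+1} (\<lambda>x. (1 + 2 * ym M x) * (1 / sqrt ((M+1)^2 + 4*M*x)) / 2)"
    proof -
      have c1: "continuous_on {0..2*M+1} (ym M)"
        by (intro continuous_at_imp_continuous_on ballI DERIV_isCont[OF ym_deriv[OF assms]]) auto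
      have c2: "continuous_on {0..2*M+1} (\<lambda>x. sqrt ((M+1)^2 + 4*M*x))"
        by (intro continuous_intros)
      have c3: "continuous_on {0..2*M+1} (\<lambda>x. 1 / sqrt ((M+1)^2 + 4*M*x))"
        by (rule continuous_on_divide[OF continuous_on_const c2]) (use pos in force)
      have c4: "continuous_on {0..2*M+1} (\<lambda>x. 1 + 2 * ym M x)"
        by (intro continuous_on_add continuous_on_const continuous_on_mult c1)
      show ?thesis
        by (intro continuous_on_divide continuous_on_mult c3 c4 continuous_on_const) auto
    qed
    fix x assume x: "x \<in> {0..2*M+1}"
    show "0 < (1 + 2 * ym M x) * (1 / sqrt ((M+1)^2 + 4*M*x)) / 2"
      using pos[of x] ym_nonneg[OF assms, of x] x by (intro divide_pos_pos mult_pos_pos) auto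
    show "(FB M has_real_derivative (1 + 2 * ym M x) * (1 / sqrt ((M+1)^2 + 4*M*x)) / 2) (at x within {0..2*M+1})"
      by (rule transf_deriv[OF derB[OF assms]]) (use x FB_in[OF assms] in auto)
  qed
qed

lemma eqA:
  assumes m: "n - 1 = m" "m \<ge> 1"
  shows "sym_equilibrium n (\<lambda>x. x) 0 (2*real m+2) (FA (real m)) (\<lambda>g. g) (\<lambda>v. real m / (real m + 1) * v)"
  unfolding sym_equilibrium_def
proof (intro conjI ballI impI)
  have M: "real m > 0" using m by simp
  show "strict_mono_on {0..2*real m+2} (\<lambda>v. real m / (real m + 1) * v)"
  proof (rule strict_mono_onI)
    fix r s :: real assume "r < s"
    moreover have "real m / (real m + 1) > 0" using M by simp
    ultimately show "real m / (real m + 1) * r < real m / (real m + 1) * s" by (rule mult_strict_left_mono)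
  qed
  fix v assume v: "v \<in> {0..2*real m+2}"
  show "real m / (real m + 1) * v \<le> v" using v M by (simp add: field_simps)
  fix x assume x: "x \<in> {0..2*real m+2}"
  define h where "h = 2*real m+2"
  have hp: "h > 0" unfolding h_def using M by simp
  have "(v - real m / (real m + 1) * x) * x ^ m / h ^ m \<le> (v - real m / (real m + 1) * v) * v ^ m / h ^ m"
    using coreA[of x v m] x v hp by (intro divide_right_mono) auto
  then show "(v - real m / (real m + 1) * x) * FA (real m) x ^ (n - 1) \<le> (v - real m / (real m + 1) * v) * FA (real m) v ^ (n - 1)"
    using FA_in[OF M, of x] FA_in[OF M, of v] x v unfolding m(1) h_def[symmetric] by (simp add: power_divide)
qed

lemma betaB: assumes "M > 0" "x \<ge> 0" shows "x - ym M x = M * PP (ym M x)"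
  using ym_Q[OF assms] by simp

lemma eqB:
  assumes m: "n - 1 = m" "m \<ge> 1"
  shows "sym_equilibrium n (\<lambda>x. x / (1 + x)) 0 (2*real m+1) (FB (real m)) (\<lambda>g. g) (\<lambda>v. v - ym (real m) v)"
  unfolding sym_equilibrium_def
proof (intro conjI ballI impI)
  define M where "M = real m"
  have M: "M > 0" using m M_def by simp
  show "strict_mono_on {0..2*real m+1} (\<lambda>v. v - ym (real m) v)"
  proof (rule strict_mono_onI)
    fix r s assume rs: "r \<in> {0..2*real m+1}" "s \<in> {0..2*real m+1}" "r < s"
    have "ym M r < ym M s" using ym_strict[OF M] rs by auto
    hence "PP (ym M r) < PP (ym M s)" using PP_strict ym_nonneg[OF M] rs by auto
    then show "r - ym (real m) r < s - ym (real m) s"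
      using betaB[OF M, of r] betaB[OF M, of s] rs M unfolding M_def by simp
  qed
  fix v assume v: "v \<in> {0..2*real m+1}"
  show "v - ym (real m) v \<le> v" using ym_nonneg[OF M, of v] v unfolding M_def by simp
  fix x assume x: "x \<in> {0..2*real m+1}" and bx: "x - ym (real m) x \<le> v"
  define y where "y = ym M v"
  define s where "s = ym M x"
  have y0: "y \<ge> 0" "s \<ge> 0" using ym_nonneg[OF M] v x unfolding y_def s_def by auto
  have vy: "v = y + M * PP y" using ym_Q[OF M, of v] v unfolding y_def by simp
  have xs: "x - ym M x = M * PP s" using betaB[OF M, of x] x unfolding s_def by simp
  have vv: "v - (v - ym M v) = y" unfolding y_def by simp
  have Z: "v - (x - ym M x) = y + M * PP y - M * PP s" unfolding xs vy by simp
  have Z0: "y + M * PP y - M * PP s \<ge> 0" using bx Z unfolding M_def by simp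
  have core: "(y + M * PP y - M * PP s) / (1 + (y + M * PP y - M * PP s)) * PP s ^ m \<le> y / (1 + y) * PP y ^ m"
    using coreB[OF m(2) y0(1) y0(2)] Z0 unfolding M_def by simp
  have "(y + M * PP y - M * PP s) / (1 + (y + M * PP y - M * PP s)) * PP s ^ m / 2 ^ m \<le> y / (1 + y) * PP y ^ m / 2 ^ m"
    using core by (intro divide_right_mono) auto
  moreover have fx: "FB M x = PP s / 2" and fv: "FB M v = PP y / 2" using FB_in[OF M] x v unfolding s_def y_def M_def by auto
  ultimately show "(v - (x - ym (real m) x)) / (1 + (v - (x - ym (real m) x))) * FB (real m) x ^ (n - 1)
      \<le> (v - (v - ym (real m) v)) / (1 + (v - (v - ym (real m) v))) * FB (real m) v ^ (n - 1)"
    unfolding m(1) M_def[symmetric] Z vv fx fv by (simp add: power_divide)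
qed

definition gcdf :: "real \<Rightarrow> real \<Rightarrow> real" where
  "gcdf M b = (if b < 0 then 0 else if 2*M \<le> b then 1 else b / (2*M))"

lemma bidA: assumes M: "M > 0"
  shows "bid_cdf 0 (2*M+2) (FA M) (\<lambda>v. M / (M + 1) * v) b = gcdf M b"
proof -
  have c: "M / (M+1) > 0" using M by simp
  consider "b < 0" | "2*M \<le> b" | "0 \<le> b" "b < 2*M" by linarith
  then show ?thesis
  proof cases
    case 1
    have "{v \<in> {0..2*M+2}. M / (M + 1) * v \<le> b} = {}"
    proof -
      have "M / (M + 1) * v \<ge> 0" if "v \<ge> 0" for v using c that by (metis less_imp_le mult_nonneg_nonneg)
      then show ?thesis using 1 by (smt (verit) atLeastAtMost_iff empty_Collect_eq)
    qed
    then show ?thesis using 1 unfolding bid_cdf_def gcdf_def by simp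
  next
    case 2
    have "{v \<in> {0..2*M+2}. M / (M + 1) * v \<le> b} = {0..2*M+2}"
    proof -
      have "M / (M + 1) * v \<le> b" if "v \<le> 2*M+2" for v
      proof -
        have "M / (M + 1) * v \<le> M / (M + 1) * (2*M+2)" using that c by (intro mult_left_mono) auto
        also have "\<dots> = 2*M" using M by (simp add: field_simps)
        finally show ?thesis using 2 by simp
      qed
      then show ?thesis by auto
    qed
    then show ?thesis using 2 M unfolding bid_cdf_def gcdf_def by (simp add: FA_def)
  next
    case 3
    define w where "w = b * (M+1) / M"
    have w: "0 \<le> w" "w < 2*M+2"
    proof -
      show "0 \<le> w" unfolding w_def using 3 M by simp
      have "b / M < 2" using 3 M by (simp add: field_simps)
      hence "b / M * (M+1) < 2 * (M+1)" using M by (intro mult_strict_right_mono) auto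
      then show "w < 2*M+2" unfolding w_def by (simp add: field_simps)
    qed
    have "{v \<in> {0..2*M+2}. M / (M + 1) * v \<le> b} = {0..w}"
    proof -
      have iff: "M / (M + 1) * v \<le> b \<longleftrightarrow> v \<le> w" for v
        unfolding w_def using M by (simp add: field_simps)
      show ?thesis unfolding iff using w by auto
    qed
    moreover have "FA M w = b / (2*M)"
    proof -
      have "FA M w = w / (2*M+2)" using FA_in[OF M, of w] w by simp
      also have "\<dots> = (b * (M+1)) / ((2*M) * (M+1))" unfolding w_def by (simp add: algebra_simps)
      also have "\<dots> = b / (2*M)" using M by (intro nonzero_mult_divide_mult_cancel_right) simp
      finally show ?thesis .
    qed
    ultimately show ?thesis using 3 w unfolding bid_cdf_def gcdf_def by simp
  qed
qed

lemma ym_mono: "M > 0 \<Longrightarrow> 0 \<le> v \<Longrightarrow> v \<le> w \<Longrightarrow> ym M v \<le> ym M w"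
  using ym_strict[of M v w] by (cases "v = w") auto

lemma PP_le_iff: "0 \<le> a \<Longrightarrow> 0 \<le> b \<Longrightarrow> PP a \<le> PP b \<longleftrightarrow> a \<le> b"
  using PP_mono PP_strict by (metis not_le)

lemma bidB: assumes M: "M > 0"
  shows "bid_cdf 0 (2*M+1) (FB M) (\<lambda>v. v - ym M v) b = gcdf M b"
proof -
  have bet: "v - ym M v = M * PP (ym M v)" if "v \<ge> 0" for v using betaB[OF M that] .
  consider "b < 0" | "2*M \<le> b" | "0 \<le> b" "b < 2*M" by linarith
  then show ?thesis
  proof cases
    case 1
    have "{v \<in> {0..2*M+1}. v - ym M v \<le> b} = {}"
    proof -
      have "v - ym M v \<ge> 0" if "v \<ge> 0" for v
        using bet[OF that] M PP_nonneg[OF ym_nonneg[OF M that]] by simp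
      then show ?thesis using 1 by (smt (verit) atLeastAtMost_iff empty_Collect_eq)
    qed
    then show ?thesis using 1 unfolding bid_cdf_def gcdf_def by simp
  next
    case 2
    have "{v \<in> {0..2*M+1}. v - ym M v \<le> b} = {0..2*M+1}"
    proof -
      have "v - ym M v \<le> b" if "0 \<le> v" "v \<le> 2*M+1" for v
      proof -
        have "ym M v \<le> 1" using ym_mono[OF M that] ym1[OF M] by simp
        hence "PP (ym M v) \<le> PP 1" using PP_mono ym_nonneg[OF M that(1)] by simp
        hence "M * PP (ym M v) \<le> M * 2" using M by (simp add: PP_def)
        then show ?thesis using bet[OF that(1)] 2 by simp
      qed
      then show ?thesis by auto
    qed
    then show ?thesis using 2 M unfolding bid_cdf_def gcdf_def by (simp add: FB_def)
  next
    case 3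
    define r where "r = sqrt (1 + 4*b/M)"
    define ys where "ys = (r - 1) / 2"
    have r2: "r^2 = 1 + 4*b/M" unfolding r_def using 3 M by simp
    have r1: "r \<ge> 1" unfolding r_def using 3 M by simp
    have r3: "r < 3"
    proof -
      have "1 + 4*b/M < 9" using 3 M by (simp add: field_simps)
      hence "r < sqrt 9" unfolding r_def by (rule real_sqrt_less_mono)
      moreover have "sqrt 9 = (3::real)" by (rule real_sqrt_unique) auto
      ultimately show ?thesis by simp
    qed
    have ys: "0 \<le> ys" "ys < 1" unfolding ys_def using r1 r3 by auto
    have PPys: "M * PP ys = b"
    proof -
      have "PP ys = (r^2 - 1)/4" unfolding ys_def PP_def by (simp add: field_simps power2_eq_square)
      then show ?thesis using r2 M by simp
    qed
    define vs where "vs = ys + M * PP ys"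
    have vs: "0 \<le> vs" "vs < 2*M+1"
    proof -
      show "0 \<le> vs" unfolding vs_def using ys PP_nonneg[of ys] M by simp
      have "vs < 1 + M * PP 1" unfolding vs_def by (rule Q_strict[OF M ys])
      then show "vs < 2*M+1" by (simp add: PP_def)
    qed
    have ymvs: "ym M vs = ys" unfolding vs_def by (rule Q_ym[OF M ys(1)])
    have "{v \<in> {0..2*M+1}. v - ym M v \<le> b} = {0..vs}"
    proof (intro set_eqI iffI)
      fix v assume "v \<in> {v \<in> {0..2*M+1}. v - ym M v \<le> b}"
      hence v: "0 \<le> v" "M * PP (ym M v) \<le> M * PP ys" using bet PPys by auto
      hence "PP (ym M v) \<le> PP ys" using M by simp
      hence "ym M v \<le> ys" using PP_le_iff ym_nonneg[OF M v(1)] ys(1) by blast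
      hence "ym M v + M * PP (ym M v) \<le> ys + M * PP ys"
        using Q_strict[OF M, of "ym M v" ys] ym_nonneg[OF M v(1)] by (cases "ym M v = ys") auto
      then show "v \<in> {0..vs}" using ym_Q[OF M v(1)] v(1) unfolding vs_def by simp
    next
      fix v assume "v \<in> {0..vs}"
      hence v: "0 \<le> v" "v \<le> vs" by auto
      have "ym M v \<le> ys" using ym_mono[OF M v(1) v(2)] unfolding ymvs .
      hence "PP (ym M v) \<le> PP ys" using PP_mono ym_nonneg[OF M v(1)] by blast
      hence "M * PP (ym M v) \<le> M * PP ys" using M by (intro mult_left_mono) auto
      hence "M * PP (ym M v) \<le> b" unfolding PPys .
      then show "v \<in> {v \<in> {0..2*M+1}. v - ym M v \<le> b}" using v vs bet[OF v(1)] by auto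
    qed
    moreover have "FB M vs = b / (2*M)" using FB_in[OF M, of vs] vs ymvs PPys M by (simp add: field_simps)
    ultimately show ?thesis using 3 vs unfolding bid_cdf_def gcdf_def by simp
  qed
qed

theorem proposition1:
  fixes n :: nat
  assumes "n \<ge> 2"
  shows "\<exists>u lo hi F0 D u' lo' hi' F0' D' \<beta> \<beta>'.
           model_structure u lo hi F0 D \<and> model_structure u' lo' hi' F0' D' \<and>
           F0 \<noteq> F0' \<and>
           sym_equilibrium n u lo hi F0 D \<beta> \<and> sym_equilibrium n u' lo' hi' F0' D' \<beta>' \<and>
           (\<forall>b. bid_cdf lo hi F0 \<beta> b = bid_cdf lo' hi' F0' \<beta>' b)"
proof -
  define m where "m = n - 1"
  have m: "n - 1 = m" "m \<ge> 1" using assms unfolding m_def by auto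
  define M where "M = real m"
  have M: "M > 0" using m(2) unfolding M_def by simp
  have A: "model_structure (\<lambda>x. x) 0 (2*M+2) (FA M) (\<lambda>g. g)"
    by (rule model_single[OF utility_lin valA[OF M] smA[OF M]])
  have B: "model_structure (\<lambda>x. x / (1 + x)) 0 (2*M+1) (FB M) (\<lambda>g. g)"
    by (rule model_single[OF utility_frac valB[OF M] smB[OF M]])
  have ne: "FA M \<noteq> FB M"
  proof
    assume eq: "FA M = FB M"
    have "FA M (2*M+1) = (2*M+1) / (2*M+2)" using FA_in[OF M, of "2*M+1"] M by simp
    moreover have "FB M (2*M+1) = 1" unfolding FB_def using M by simp
    moreover have "(2*M+1) / (2*M+2) \<noteq> 1" using M by simp
    ultimately show False using eq by simp
  qed
  have eA: "sym_equilibrium n (\<lambda>x. x) 0 (2*M+2) (FA M) (\<lambda>g. g) (\<lambda>v. M / (M + 1) * v)"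
    using eqA[OF m] unfolding M_def .
  have eB: "sym_equilibrium n (\<lambda>x. x / (1 + x)) 0 (2*M+1) (FB M) (\<lambda>g. g) (\<lambda>v. v - ym M v)"
    using eqB[OF m] unfolding M_def .
  have bid: "\<forall>b. bid_cdf 0 (2*M+2) (FA M) (\<lambda>v. M / (M + 1) * v) b = bid_cdf 0 (2*M+1) (FB M) (\<lambda>v. v - ym M v) b"
    using bidA[OF M] bidB[OF M] by simp
  show ?thesis using A B ne eA eB bid by blast
qed

end
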